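(* Let $\alpha,\beta,\gamma$ be partitions with $\alpha_1\le2$ and let $\Gamma$ be an LR-tableau of type $(\alpha,\beta,\gamma)$ such that every row of $\Gamma$ contains at most one (non-empty) box. Then in the poset $(\mathcal D_\Gamma,\le_{\rm arc})$ all saturated chains have the same length.
   Context: For a partition $\lambda$, $\lambda'$ is its conjugate; here the diagram of $\lambda$ is drawn with $\lambda'_i$ boxes in row $i$, so for $\gamma\subseteq\beta$ the $i$-th row of the skew diagram $\beta\setminus\gamma$ consists of the boxes in columns $\gamma'_i+1,\dots,\beta'_i$. With $\alpha_1\le 2$, $\alpha'=(\alpha'_1,\alpha'_2)$. An LR-tableau of type $(\alpha,\beta,\gamma)$ is a filling of $\beta\setminus\gamma$ with $\alpha'_1$ entries $1$ and $\alpha'_2$ entries $2$, weakly increasing along rows, strictly increasing down columns, and such that for each $c\ge0$ the number of entries $1$ in columns to the right of column $c$ is at least the number of entries $2$ there. Place the positive integers on a line in decreasing order from left to right. An arc is a pair $(m,n)$, $m>n$ positive integers (source $m$, target $n$); a pole at $n$ is regarded as an arc $(\infty,n)$. An arc diagram of type $(\alpha,\beta,\gamma)$ is a finite multiset of $\alpha'_2$ arcs and $\alpha'_1-\alpha'_2$ poles with, for each $i$, exactly $\beta'_i-\gamma'_i$ members having source or target $i$. It has LR type $\Gamma$ if for each $i$ the number of arcs with source $i$ equals the number of entries $2$ in row $i$ of $\Gamma$; $\mathcal D_\Gamma$ is the set of arc diagrams of type $(\alpha,\beta,\gamma)$ of LR type $\Gamma$. Members $(m,n),(k,r)$ cross iff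 $r<n<k<m$ or $n<r<m<k$. Moves: for $a>b>c>d$, (A) replaces arcs $(a,c),(b,d)$ by $(a,d),(b,c)$; for $a>b>c$, (B) replaces arc $(a,c)$ and pole $(\infty,b)$ by arc $(a,b)$ and pole $(\infty,c)$; (C) replaces arcs $(a,c),(b,d)$ by $(a,b),(c,d)$; (D) replaces arc $(a,c)$ and pole $(\infty,b)$ by arc $(b,c)$ and pole $(\infty,a)$. $\Delta\le_{\rm arc}\Delta'$ iff $\Delta$ is obtained from $\Delta'$ by a finite (possibly empty) sequence of moves; $\mathcal D_\Gamma$ carries the restricted order. A chain is saturated if it has no refinement, i.e. is not properly contained in another chain of the poset. *)

theory Defs
  imports Main "HOL-Library.Multiset" "HOL-Library.Extended_Nat"
begin

definition is_partition :: "nat list \<Rightarrow> bool" where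
  "is_partition lam \<longleftrightarrow> sorted (rev lam) \<and> 0 \<notin> set lam"

definition conjugate :: "nat list \<Rightarrow> nat \<Rightarrow> nat" where
  "conjugate lam i = length (filter (\<lambda>x. i \<le> x) lam)"

text \<open>Boxes (row i, column j) of the skew diagram beta \ gamma; row i has
  conjugate beta i boxes in beta, so row i of beta \ gamma is columns conjugate gamma i + 1 .. conjugate beta i.\<close>
definition skew_boxes :: "nat list \<Rightarrow> nat list \<Rightarrow> (nat \<times> nat) set" where
  "skew_boxes beta gamma = {(i, j). 1 \<le> i \<and> conjugate gamma i < j \<and> j \<le> conjugate beta i}"

text \<open>LR-tableau of type (alpha, beta, gamma) with alpha_1 \<le> 2; T i j is the entry in row i, column j.\<close>
definition LR_tableau :: "nat list \<Rightarrow> nat list \<Rightarrow> nat list \<Rightarrow> (nat \<Rightarrow> nat \<Rightarrow> nat) \<Rightarrow> bool" where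
  "LR_tableau alpha beta gamma T \<longleftrightarrow>
     (\<forall>i\<ge>1. conjugate gamma i \<le> conjugate beta i) \<and>
     (\<forall>(i, j)\<in>skew_boxes beta gamma. T i j \<in> {1, 2}) \<and>
     card {(i, j)\<in>skew_boxes beta gamma. T i j = 1} = conjugate alpha 1 \<and>
     card {(i, j)\<in>skew_boxes beta gamma. T i j = 2} = conjugate alpha 2 \<and>
     (\<forall>i j j'. (i, j) \<in> skew_boxes beta gamma \<longrightarrow> (i, j') \<in> skew_boxes beta gamma \<longrightarrow>
        j < j' \<longrightarrow> T i j \<le> T i j') \<and>
     (\<forall>i i' j. (i, j) \<in> skew_boxes beta gamma \<longrightarrow> (i', j) \<in> skew_boxes beta gamma \<longrightarrow>
        i < i' \<longrightarrow> T i j < T i' j) \<and>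
     (\<forall>c::nat. card {(i, j)\<in>skew_boxes beta gamma. c < j \<and> T i j = 2}
              \<le> card {(i, j)\<in>skew_boxes beta gamma. c < j \<and> T i j = 1})"

text \<open>Members of arc diagrams: (source, target); an arc (m, n) is (enat m, n), a pole at n is (\<infinity>, n).\<close>
type_synonym member = "enat \<times> nat"

definition valid_member :: "member \<Rightarrow> bool" where
  "valid_member x \<longleftrightarrow> 1 \<le> snd x \<and> enat (snd x) < fst x"

definition is_arc :: "member \<Rightarrow> bool" where
  "is_arc x \<longleftrightarrow> fst x \<noteq> \<infinity>"

definition is_pole :: "member \<Rightarrow> bool" where
  "is_pole x \<longleftrightarrow> fst x = \<infinity>"

definition arc_diagram :: "nat list \<Rightarrow> nat list \<Rightarrow> nat list \<Rightarrow> member multiset \<Rightarrow> bool" where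
  "arc_diagram alpha beta gamma D \<longleftrightarrow>
     (\<forall>x\<in>#D. valid_member x) \<and>
     size (filter_mset is_arc D) = conjugate alpha 2 \<and>
     size (filter_mset is_pole D) = conjugate alpha 1 - conjugate alpha 2 \<and>
     (\<forall>i\<ge>1. size (filter_mset (\<lambda>x. fst x = enat i \<or> snd x = i) D) = conjugate beta i - conjugate gamma i)"

definition has_LR_type :: "nat list \<Rightarrow> nat list \<Rightarrow> (nat \<Rightarrow> nat \<Rightarrow> nat) \<Rightarrow> member multiset \<Rightarrow> bool" where
  "has_LR_type beta gamma T D \<longleftrightarrow>
     (\<forall>i\<ge>1. size (filter_mset (\<lambda>x. fst x = enat i) D)
             = card {j. (i, j) \<in> skew_boxes beta gamma \<and> T i j = 2})"

definition D_Gamma :: "nat list \<Rightarrow> nat list \<Rightarrow> nat list \<Rightarrow> (nat \<Rightarrow> nat \<Rightarrow> nat) \<Rightarrow> member multiset set" where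
  "D_Gamma alpha beta gamma T = {D. arc_diagram alpha beta gamma D \<and> has_LR_type beta gamma T D}"

text \<open>arc_move D' D: D is obtained from D' by a single move (A), (B), (C) or (D).\<close>
definition arc_move :: "member multiset \<Rightarrow> member multiset \<Rightarrow> bool" where
  "arc_move D' D \<longleftrightarrow>
     (\<exists>a b c d::nat. a > b \<and> b > c \<and> c > d \<and>
        {#(enat a, c), (enat b, d)#} \<subseteq># D' \<and>
        D = D' - {#(enat a, c), (enat b, d)#} + {#(enat a, d), (enat b, c)#}) \<or>
     (\<exists>a b c::nat. a > b \<and> b > c \<and>
        {#(enat a, c), (\<infinity>, b)#} \<subseteq># D' \<and>
        D = D' - {#(enat a, c), (\<infinity>, b)#} + {#(enat a, b), (\<infinity>, c)#}) \<or>
     (\<exists>a b c d::nat. a > b \<and> b > c \<and> c > d \<and>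
        {#(enat a, c), (enat b, d)#} \<subseteq># D' \<and>
        D = D' - {#(enat a, c), (enat b, d)#} + {#(enat a, b), (enat c, d)#}) \<or>
     (\<exists>a b c::nat. a > b \<and> b > c \<and>
        {#(enat a, c), (\<infinity>, b)#} \<subseteq># D' \<and>
        D = D' - {#(enat a, c), (\<infinity>, b)#} + {#(enat b, c), (\<infinity>, a)#})"

definition le_arc :: "member multiset \<Rightarrow> member multiset \<Rightarrow> bool" where
  "le_arc D D' \<longleftrightarrow> arc_move\<^sup>*\<^sup>* D' D"

definition is_chain_in :: "'a set \<Rightarrow> ('a \<Rightarrow> 'a \<Rightarrow> bool) \<Rightarrow> 'a set \<Rightarrow> bool" where
  "is_chain_in P le C \<longleftrightarrow> C \<subseteq> P \<and> (\<forall>x\<in>C. \<forall>y\<in>C. le x y \<or> le y x)"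

definition saturated_chain :: "'a set \<Rightarrow> ('a \<Rightarrow> 'a \<Rightarrow> bool) \<Rightarrow> 'a set \<Rightarrow> bool" where
  "saturated_chain P le C \<longleftrightarrow> is_chain_in P le C \<and> \<not> (\<exists>C'. is_chain_in P le C' \<and> C \<subset> C')"

end

theory Submission
  imports Defs
begin

definition wt :: "member \<Rightarrow> member \<Rightarrow> nat" where
  "wt x y = (if fst y < fst x \<and> snd x < snd y then 1 else 0)"
definition gg :: "member \<Rightarrow> member \<Rightarrow> nat" where
  "gg x z = wt x z + wt z x"
definition inv :: "member multiset \<Rightarrow> nat" where
  "inv D = (\<Sum>x\<in>#D. \<Sum>y\<in>#D. wt x y)"
definition kk :: "member \<Rightarrow> member multiset \<Rightarrow> nat" where
  "kk x D = (\<Sum>z\<in>#D. gg x z)"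

lemma wt_self[simp]: "wt x x = 0" by (simp add: wt_def)

lemma inv_empty[simp]: "inv {#} = 0" by (simp add: inv_def)

lemma inv_add: "inv (add_mset x D) = inv D + kk x D"
  by (simp add: inv_def kk_def gg_def sum_mset.distrib)

lemma kk_add: "kk x (add_mset y D) = gg x y + kk x D"
  by (simp add: kk_def)

lemma inv_two: "inv (add_mset X (add_mset Y R)) = inv R + gg X Y + (\<Sum>z\<in>#R. gg X z + gg Y z)"
  by (simp add: inv_add kk_add kk_def sum_mset.distrib gg_def ac_simps)

lemma sum_lt_ex:
  fixes f g :: "'a \<Rightarrow> nat"
  assumes "sum_mset (image_mset f R) < sum_mset (image_mset g R)"
  shows "\<exists>z\<in>#R. f z < g z"
proof (rule ccontr)
  assume "\<not> ?thesis"
  hence "sum_mset (image_mset g R) \<le> sum_mset (image_mset f R)"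
    by (intro sum_mset_mono) auto
  with assms show False by simp
qed

lemma ptA:
  fixes a b c d t :: nat and s :: enat
  assumes "b < a" "c < b" "d < c" "enat t < s"
    "s \<noteq> enat a" "s \<noteq> enat b" "s \<noteq> enat c" "s \<noteq> enat d"
    "t \<noteq> a" "t \<noteq> b" "t \<noteq> c" "t \<noteq> d"
  shows "gg (enat a, c) (s,t) + gg (enat b, d) (s,t) \<le> gg (enat a, d) (s,t) + gg (enat b, c) (s,t)
     \<and> (gg (enat a, c) (s,t) + gg (enat b, d) (s,t) < gg (enat a, d) (s,t) + gg (enat b, c) (s,t)
         \<longrightarrow> enat b < s \<and> s < enat a \<and> d < t \<and> t < c)"
  using assms by (cases s) (auto simp: gg_def wt_def)

lemma ptB:
  fixes a b c t :: nat and s :: enat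
  assumes "b < a" "c < b" "enat t < s"
    "s \<noteq> enat a" "s \<noteq> enat b" "s \<noteq> enat c"
    "t \<noteq> a" "t \<noteq> b" "t \<noteq> c"
  shows "gg (enat a, c) (s,t) + gg (\<infinity>, b) (s,t) \<le> gg (enat a, b) (s,t) + gg (\<infinity>, c) (s,t)
     \<and> (gg (enat a, c) (s,t) + gg (\<infinity>, b) (s,t) < gg (enat a, b) (s,t) + gg (\<infinity>, c) (s,t)
         \<longrightarrow> enat a < s \<and> c < t \<and> t < b)"
  using assms by (cases s) (auto simp: gg_def wt_def)

definition touch :: "member \<Rightarrow> nat \<Rightarrow> bool" where
  "touch x i \<longleftrightarrow> fst x = enat i \<or> snd x = i"

definition moveAB :: "member multiset \<Rightarrow> member multiset \<Rightarrow> bool" where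
  "moveAB D' D \<longleftrightarrow>
     (\<exists>a b c d::nat. a > b \<and> b > c \<and> c > d \<and>
        {#(enat a, c), (enat b, d)#} \<subseteq># D' \<and>
        D = D' - {#(enat a, c), (enat b, d)#} + {#(enat a, d), (enat b, c)#}) \<or>
     (\<exists>a b c::nat. a > b \<and> b > c \<and>
        {#(enat a, c), (\<infinity>, b)#} \<subseteq># D' \<and>
        D = D' - {#(enat a, c), (\<infinity>, b)#} + {#(enat a, b), (\<infinity>, c)#})"

definition sv :: "enat \<Rightarrow> nat" where "sv e = (if e = \<infinity> then 0 else the_enat e)"
definition sig :: "member multiset \<Rightarrow> nat" where "sig D = sum_mset (image_mset sv (image_mset fst D))"

lemma sig_add[simp]: "sig (add_mset x D) = sv (fst x) + sig D" by (simp add: sig_def)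
lemma sig_union[simp]: "sig (A + B) = sig A + sig B" by (simp add: sig_def)
lemma sv_enat[simp]: "sv (enat n) = n" and sv_inf[simp]: "sv \<infinity> = 0" by (auto simp: sv_def)

lemma sub_split: assumes "{#x, y#} \<subseteq># P" shows "P = add_mset x (add_mset y (P - {#x, y#}))"
proof -
  have "{#x,y#} + (P - {#x,y#}) = P" by (rule subset_mset.add_diff_inverse[OF assms])
  thus ?thesis by simp
qed

lemma two_sub: assumes "x \<in># D" "y \<in># D" "x \<noteq> y" shows "{#x, y#} \<subseteq># D"
proof -
  have "y \<in># D - {#x#}" using assms by (simp add: in_diff_count)
  hence "{#x,y#} \<subseteq># add_mset x (D - {#x#})" by simp
  thus ?thesis using insert_DiffM[OF assms(1)] by simp
qed

lemma mvA: "b < a \<Longrightarrow> c < b \<Longrightarrow> d < c \<Longrightarrow>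
  moveAB (add_mset (enat a, c) (add_mset (enat b, d) R)) (add_mset (enat a, d) (add_mset (enat b, c) R))"
  unfolding moveAB_def by (rule disjI1, rule exI[of _ a], rule exI[of _ b], rule exI[of _ c], rule exI[of _ d]) simp

lemma mvB: "b < a \<Longrightarrow> c < b \<Longrightarrow>
  moveAB (add_mset (enat a, c) (add_mset (\<infinity>, b) R)) (add_mset (enat a, b) (add_mset (\<infinity>, c) R))"
  unfolding moveAB_def by (rule disjI2, rule exI[of _ a], rule exI[of _ b], rule exI[of _ c]) simp

lemma moveAB_arc: "moveAB P Q \<Longrightarrow> arc_move P Q"
  unfolding moveAB_def arc_move_def by blast

lemma moveAB_cases:
  assumes "moveAB P Q"
  shows "(\<exists>a b c d R. b < a \<and> c < b \<and> d < c \<and> P = add_mset (enat a, c) (add_mset (enat b, d) R)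
            \<and> Q = add_mset (enat a, d) (add_mset (enat b, c) R)) \<or>
         (\<exists>a b c R. b < a \<and> c < b \<and> P = add_mset (enat a, c) (add_mset (\<infinity>, b) R)
            \<and> Q = add_mset (enat a, b) (add_mset (\<infinity>, c) R))"
  using assms unfolding moveAB_def
proof (elim disjE exE conjE)
  fix a b c d assume h: "b < a" "c < b" "d < c" "{#(enat a, c), (enat b, d)#} \<subseteq># P"
    "Q = P - {#(enat a, c), (enat b, d)#} + {#(enat a, d), (enat b, c)#}"
  show ?thesis
  proof (rule disjI1, intro exI conjI)
    show "P = add_mset (enat a, c) (add_mset (enat b, d) (P - {#(enat a, c), (enat b, d)#}))"
      using sub_split[OF h(4)] .
    show "Q = add_mset (enat a, d) (add_mset (enat b, c) (P - {#(enat a, c), (enat b, d)#}))"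
      using h(5) by simp
  qed (use h in auto)
next
  fix a b c assume h: "b < a" "c < b" "{#(enat a, c), (\<infinity>, b)#} \<subseteq># P"
    "Q = P - {#(enat a, c), (\<infinity>, b)#} + {#(enat a, b), (\<infinity>, c)#}"
  show ?thesis
  proof (rule disjI2, intro exI conjI)
    show "P = add_mset (enat a, c) (add_mset (\<infinity>, b) (P - {#(enat a, c), (\<infinity>, b)#}))"
      using sub_split[OF h(3)] .
    show "Q = add_mset (enat a, b) (add_mset (\<infinity>, c) (P - {#(enat a, c), (\<infinity>, b)#}))"
      using h(4) by simp
  qed (use h in auto)
qed

lemma sig_move: "arc_move P Q \<Longrightarrow> sig Q \<le> sig P \<and> (sig Q = sig P \<longrightarrow> moveAB P Q)"
  unfolding arc_move_def
proof (elim disjE exE conjE)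
  fix a b c d assume h: "b < a" "c < b" "d < c" "{#(enat a, c), (enat b, d)#} \<subseteq># P"
    "Q = P - {#(enat a, c), (enat b, d)#} + {#(enat a, d), (enat b, c)#}"
  define R where "R = P - {#(enat a, c), (enat b, d)#}"
  have eq: "P = add_mset (enat a, c) (add_mset (enat b, d) R)"
    unfolding R_def by (rule sub_split[OF h(4)])
  have "sig P = a + b + sig R" by (subst eq) simp
  moreover have "sig Q = a + b + sig R" using h(5) unfolding R_def[symmetric] by simp
  moreover have "moveAB P Q" unfolding moveAB_def using h by blast
  ultimately show ?thesis by simp
next
  fix a b c assume h: "b < a" "c < b" "{#(enat a, c), (\<infinity>, b)#} \<subseteq># P"
    "Q = P - {#(enat a, c), (\<infinity>, b)#} + {#(enat a, b), (\<infinity>, c)#}"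
  define R where "R = P - {#(enat a, c), (\<infinity>, b)#}"
  have eq: "P = add_mset (enat a, c) (add_mset (\<infinity>, b) R)"
    unfolding R_def by (rule sub_split[OF h(3)])
  have "sig P = a + sig R" by (subst eq) simp
  moreover have "sig Q = a + sig R" using h(4) unfolding R_def[symmetric] by simp
  moreover have "moveAB P Q" unfolding moveAB_def using h by blast
  ultimately show ?thesis by simp
next
  fix a b c d assume h: "b < a" "c < b" "d < c" "{#(enat a, c), (enat b, d)#} \<subseteq># P"
    "Q = P - {#(enat a, c), (enat b, d)#} + {#(enat a, b), (enat c, d)#}"
  define R where "R = P - {#(enat a, c), (enat b, d)#}"
  have eq: "P = add_mset (enat a, c) (add_mset (enat b, d) R)"
    unfolding R_def by (rule sub_split[OF h(4)])
  have "sig P = a + b + sig R" by (subst eq) simp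
  moreover have "sig Q = a + c + sig R" using h(5) unfolding R_def[symmetric] by simp
  ultimately show ?thesis using h by simp
next
  fix a b c assume h: "b < a" "c < b" "{#(enat a, c), (\<infinity>, b)#} \<subseteq># P"
    "Q = P - {#(enat a, c), (\<infinity>, b)#} + {#(enat b, c), (\<infinity>, a)#}"
  define R where "R = P - {#(enat a, c), (\<infinity>, b)#}"
  have eq: "P = add_mset (enat a, c) (add_mset (\<infinity>, b) R)"
    unfolding R_def by (rule sub_split[OF h(3)])
  have "sig P = a + sig R" by (subst eq) simp
  moreover have "sig Q = b + sig R" using h(4) unfolding R_def[symmetric] by simp
  ultimately show ?thesis using h by simp
qed

lemma sig_path: "arc_move\<^sup>*\<^sup>* P Q \<Longrightarrow> sig Q \<le> sig P"
proof (induction rule: rtranclp_induct)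
  case (step y z)
  then show ?case using sig_move[OF step(2)] by linarith
qed simp

lemma count_image_filter: "count (image_mset f D) v = size (filter_mset (\<lambda>x. f x = v) D)"
  by (induction D) auto

lemma size_filter_two: "size (filter_mset P {#x, y#}) = (if P x then 1 else 0) + (if P y then 1 else 0)"
  by simp

context
  fixes alpha beta gamma :: "nat list" and T :: "nat \<Rightarrow> nat \<Rightarrow> nat"
  assumes h6: "\<forall>i\<ge>1. conjugate beta i - conjugate gamma i \<le> 1"
begin


lemma DG_valid: "D \<in> D_Gamma alpha beta gamma T \<Longrightarrow> x \<in># D \<Longrightarrow> valid_member x"
  by (simp add: D_Gamma_def arc_diagram_def)

lemma DG_touch: "D \<in> D_Gamma alpha beta gamma T \<Longrightarrow> 1 \<le> i \<Longrightarrow> size (filter_mset (\<lambda>x. touch x i) D) \<le> 1"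
  using h6 by (simp add: D_Gamma_def arc_diagram_def touch_def)

lemma DG_two: assumes "D \<in> D_Gamma alpha beta gamma T" "{#x, y#} \<subseteq># D" "1 \<le> i" "touch x i" "touch y i" shows False
proof -
  have "filter_mset (\<lambda>x. touch x i) {#x, y#} \<subseteq># filter_mset (\<lambda>x. touch x i) D"
    by (rule multiset_filter_mono[OF assms(2)])
  hence "size (filter_mset (\<lambda>x. touch x i) {#x, y#}) \<le> size (filter_mset (\<lambda>x. touch x i) D)"
    by (rule size_mset_mono)
  with assms(4,5) DG_touch[OF assms(1,3)] show False by simp
qed

lemma DG_pres:
  assumes "R + M \<in> D_Gamma alpha beta gamma T" "\<forall>x\<in>#M'. valid_member x"
    "size (filter_mset is_arc M') = size (filter_mset is_arc M)"
    "size (filter_mset is_pole M') = size (filter_mset is_pole M)"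
    "\<forall>i. size (filter_mset (\<lambda>x. fst x = enat i \<or> snd x = i) M') = size (filter_mset (\<lambda>x. fst x = enat i \<or> snd x = i) M)"
    "\<forall>i. size (filter_mset (\<lambda>x. fst x = enat i) M') = size (filter_mset (\<lambda>x. fst x = enat i) M)"
  shows "R + M' \<in> D_Gamma alpha beta gamma T"
  using assms unfolding D_Gamma_def arc_diagram_def has_LR_type_def by (simp; blast)

lemma DG_presA:
  assumes "add_mset (enat a, c) (add_mset (enat b, d) R) \<in> D_Gamma alpha beta gamma T" "b < a" "c < b" "d < c"
  shows "add_mset (enat a, d) (add_mset (enat b, c) R) \<in> D_Gamma alpha beta gamma T"
proof -
  have "valid_member (enat b, d)" using DG_valid[OF assms(1)] by simp
  hence d1: "1 \<le> d" by (simp add: valid_member_def)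
  have "R + {#(enat a, d), (enat b, c)#} \<in> D_Gamma alpha beta gamma T"
  proof (rule DG_pres[of R "{#(enat a, c), (enat b, d)#}"])
  qed (use assms d1 in \<open>auto simp: valid_member_def is_arc_def is_pole_def\<close>)
  thus ?thesis by simp
qed

lemma DG_presA':
  assumes "add_mset (enat a, d) (add_mset (enat b, c) R) \<in> D_Gamma alpha beta gamma T" "b < a" "c < b" "d < c"
  shows "add_mset (enat a, c) (add_mset (enat b, d) R) \<in> D_Gamma alpha beta gamma T"
proof -
  have "valid_member (enat a, d)" using DG_valid[OF assms(1)] by simp
  hence d1: "1 \<le> d" by (simp add: valid_member_def)
  have "R + {#(enat a, c), (enat b, d)#} \<in> D_Gamma alpha beta gamma T"
  proof (rule DG_pres[of R "{#(enat a, d), (enat b, c)#}"])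
  qed (use assms d1 in \<open>auto simp: valid_member_def is_arc_def is_pole_def\<close>)
  thus ?thesis by simp
qed

lemma DG_presB:
  assumes "add_mset (enat a, c) (add_mset (\<infinity>, b) R) \<in> D_Gamma alpha beta gamma T" "b < a" "c < b"
  shows "add_mset (enat a, b) (add_mset (\<infinity>, c) R) \<in> D_Gamma alpha beta gamma T"
proof -
  have "valid_member (enat a, c)" using DG_valid[OF assms(1)] by simp
  hence d1: "1 \<le> c" by (simp add: valid_member_def)
  have "R + {#(enat a, b), (\<infinity>, c)#} \<in> D_Gamma alpha beta gamma T"
  proof (rule DG_pres[of R "{#(enat a, c), (\<infinity>, b)#}"])
  qed (use assms d1 in \<open>auto simp: valid_member_def is_arc_def is_pole_def\<close>)
  thus ?thesis by simp
qed

lemma DG_presB':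
  assumes "add_mset (enat a, b) (add_mset (\<infinity>, c) R) \<in> D_Gamma alpha beta gamma T" "b < a" "c < b"
  shows "add_mset (enat a, c) (add_mset (\<infinity>, b) R) \<in> D_Gamma alpha beta gamma T"
proof -
  have "valid_member (\<infinity>, c)" using DG_valid[OF assms(1)] by simp
  hence d1: "1 \<le> c" by (simp add: valid_member_def)
  have "R + {#(enat a, c), (\<infinity>, b)#} \<in> D_Gamma alpha beta gamma T"
  proof (rule DG_pres[of R "{#(enat a, b), (\<infinity>, c)#}"])
  qed (use assms d1 in \<open>auto simp: valid_member_def is_arc_def is_pole_def\<close>)
  thus ?thesis by simp
qed

lemma DG_moveAB: "P \<in> D_Gamma alpha beta gamma T \<Longrightarrow> moveAB P Q \<Longrightarrow> Q \<in> D_Gamma alpha beta gamma T"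
  using moveAB_cases[of P Q] DG_presA DG_presB by blast

end

context
  fixes alpha beta gamma :: "nat list" and T :: "nat \<Rightarrow> nat \<Rightarrow> nat"
  assumes h6: "\<forall>i\<ge>1. conjugate beta i - conjugate gamma i \<le> 1"
begin

lemma SF_A:
  assumes P: "add_mset (enat a, c) (add_mset (enat b, d) R) \<in> D_Gamma alpha beta gamma T" and o: "b < a" "c < b" "d < c"
  defines "PP \<equiv> add_mset (enat a, c) (add_mset (enat b, d) R)"
      and "QQ \<equiv> add_mset (enat a, d) (add_mset (enat b, c) R)"
  shows "inv PP < inv QQ \<and> (inv PP + 2 \<le> inv QQ \<longrightarrow> (\<exists>Z Z2. moveAB PP Z \<and> moveAB Z Z2 \<and> arc_move\<^sup>*\<^sup>* Z2 QQ))"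
proof -
  let ?X = "(enat a, c)" and ?Y = "(enat b, d)" and ?X' = "(enat a, d)" and ?Y' = "(enat b, c)"
  have "valid_member ?Y" using DG_valid[OF h6 P] by simp
  hence d1: "1 \<le> d" by (simp add: valid_member_def)
  have pt: "gg ?X z + gg ?Y z \<le> gg ?X' z + gg ?Y' z \<and>
      (gg ?X z + gg ?Y z < gg ?X' z + gg ?Y' z \<longrightarrow> enat b < fst z \<and> fst z < enat a \<and> d < snd z \<and> snd z < c)"
    if z: "z \<in># R" for z
  proof -
    obtain s t where zst: "z = (s, t)" by fastforce
    have vz: "valid_member z" using DG_valid[OF h6 P] z by simp
    hence t1: "1 \<le> t" "enat t < s" using zst by (auto simp: valid_member_def)
    have sX: "{#?X, z#} \<subseteq># add_mset ?X (add_mset ?Y R)" using z by simp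
    have sY: "{#?Y, z#} \<subseteq># add_mset ?X (add_mset ?Y R)" using z
      by (simp add: add_mset_commute[of ?X ?Y])
    have nt: "\<not> touch z i" if "i \<in> {a, b, c, d}" for i
    proof
      assume tz: "touch z i"
      have i1: "1 \<le> i" using that o d1 by auto
      show False
      proof (cases "i = a \<or> i = c")
        case True
        then show ?thesis using DG_two[OF h6 P sX i1 _ tz] by (auto simp: touch_def)
      next
        case False
        then have "i = b \<or> i = d" using that by auto
        then show ?thesis using DG_two[OF h6 P sY i1 _ tz] by (auto simp: touch_def)
      qed
    qed
    have "s \<noteq> enat a" "s \<noteq> enat b" "s \<noteq> enat c" "s \<noteq> enat d"
      "t \<noteq> a" "t \<noteq> b" "t \<noteq> c" "t \<noteq> d"
      using nt[of a] nt[of b] nt[of c] nt[of d] zst by (auto simp: touch_def)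
    from ptA[OF o t1(2) this] show ?thesis using zst by simp
  qed
  have e1: "inv PP = inv R + 0 + (\<Sum>z\<in>#R. gg ?X z + gg ?Y z)"
    unfolding PP_def inv_two using o by (simp add: gg_def wt_def)
  have e2: "inv QQ = inv R + 1 + (\<Sum>z\<in>#R. gg ?X' z + gg ?Y' z)"
    unfolding QQ_def inv_two using o by (simp add: gg_def wt_def)
  have le: "(\<Sum>z\<in>#R. gg ?X z + gg ?Y z) \<le> (\<Sum>z\<in>#R. gg ?X' z + gg ?Y' z)"
    by (rule sum_mset_mono) (use pt in blast)
  show ?thesis
  proof (intro conjI impI)
    show "inv PP < inv QQ" using e1 e2 le by linarith
    assume "inv PP + 2 \<le> inv QQ"
    hence "(\<Sum>z\<in>#R. gg ?X z + gg ?Y z) < (\<Sum>z\<in>#R. gg ?X' z + gg ?Y' z)" using e1 e2 by linarith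
    then obtain z where z: "z \<in># R" "gg ?X z + gg ?Y z < gg ?X' z + gg ?Y' z"
      using sum_lt_ex by blast
    with pt have c1: "enat b < fst z" "fst z < enat a" "d < snd z" "snd z < c" by blast+
    then obtain s' where s': "fst z = enat s'" by (cases "fst z") auto
    define t where "t = snd z"
    have zz: "z = (enat s', t)" using s' t_def by (cases z) auto
    have c2: "b < s'" "s' < a" "d < t" "t < c" using c1 s' t_def by auto
    obtain R0 where R0: "R = add_mset z R0" using multi_member_split[OF z(1)] by blast
    define Z where "Z = add_mset (enat a, t) (add_mset (enat b, d) (add_mset (enat s', c) R0))"
    define Z2 where "Z2 = add_mset (enat a, d) (add_mset (enat b, t) (add_mset (enat s', c) R0))"
    have m1: "moveAB PP Z"
      using mvA[of s' a c t "add_mset (enat b, d) R0"] c2 o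
      unfolding PP_def Z_def R0 zz by (simp add: add_mset_commute)
    have m2: "moveAB Z Z2"
      using mvA[of b a t d "add_mset (enat s', c) R0"] c2 o
      unfolding Z2_def Z_def by (simp add: add_mset_commute)
    have m3: "moveAB Z2 QQ"
      using mvA[of b s' c t "add_mset (enat a, d) R0"] c2 o
      unfolding Z2_def QQ_def R0 zz by (simp add: add_mset_commute)
    show "\<exists>Z Z2. moveAB PP Z \<and> moveAB Z Z2 \<and> arc_move\<^sup>*\<^sup>* Z2 QQ"
      using m1 m2 moveAB_arc[OF m3] by blast
  qed
qed


lemma SF_B:
  assumes P: "add_mset (enat a, c) (add_mset (\<infinity>, b) R) \<in> D_Gamma alpha beta gamma T" and o: "b < a" "c < b"
  defines "PP \<equiv> add_mset (enat a, c) (add_mset (\<infinity>, b) R)"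
      and "QQ \<equiv> add_mset (enat a, b) (add_mset (\<infinity>, c) R)"
  shows "inv PP < inv QQ \<and> (inv PP + 2 \<le> inv QQ \<longrightarrow> (\<exists>Z Z2. moveAB PP Z \<and> moveAB Z Z2 \<and> arc_move\<^sup>*\<^sup>* Z2 QQ))"
proof -
  let ?X = "(enat a, c)" and ?Y = "(\<infinity>, b)" and ?X' = "(enat a, b)" and ?Y' = "(\<infinity>, c)"
  have "valid_member ?X" using DG_valid[OF h6 P] by simp
  hence d1: "1 \<le> c" by (simp add: valid_member_def)
  have pt: "gg ?X z + gg ?Y z \<le> gg ?X' z + gg ?Y' z \<and>
      (gg ?X z + gg ?Y z < gg ?X' z + gg ?Y' z \<longrightarrow> enat a < fst z \<and> c < snd z \<and> snd z < b)"
    if z: "z \<in># R" for z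
  proof -
    obtain s t where zst: "z = (s, t)" by fastforce
    have vz: "valid_member z" using DG_valid[OF h6 P] z by simp
    hence t1: "1 \<le> t" "enat t < s" using zst by (auto simp: valid_member_def)
    have sX: "{#?X, z#} \<subseteq># add_mset ?X (add_mset ?Y R)" using z by simp
    have sY: "{#?Y, z#} \<subseteq># add_mset ?X (add_mset ?Y R)" using z
      by (simp add: add_mset_commute[of ?X ?Y])
    have nt: "\<not> touch z i" if "i \<in> {a, b, c}" for i
    proof
      assume tz: "touch z i"
      have i1: "1 \<le> i" using that o d1 by auto
      show False
      proof (cases "i = a \<or> i = c")
        case True
        then show ?thesis using DG_two[OF h6 P sX i1 _ tz] by (auto simp: touch_def)
      next
        case False
        then have "i = b" using that by auto
        then show ?thesis using DG_two[OF h6 P sY i1 _ tz] by (auto simp: touch_def)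
      qed
    qed
    have "s \<noteq> enat a" "s \<noteq> enat b" "s \<noteq> enat c"
      "t \<noteq> a" "t \<noteq> b" "t \<noteq> c"
      using nt[of a] nt[of b] nt[of c] zst by (auto simp: touch_def)
    from ptB[OF o t1(2) this] show ?thesis using zst by simp
  qed
  have e1: "inv PP = inv R + 0 + (\<Sum>z\<in>#R. gg ?X z + gg ?Y z)"
    unfolding PP_def inv_two using o by (simp add: gg_def wt_def)
  have e2: "inv QQ = inv R + 1 + (\<Sum>z\<in>#R. gg ?X' z + gg ?Y' z)"
    unfolding QQ_def inv_two using o by (simp add: gg_def wt_def)
  have le: "(\<Sum>z\<in>#R. gg ?X z + gg ?Y z) \<le> (\<Sum>z\<in>#R. gg ?X' z + gg ?Y' z)"
    by (rule sum_mset_mono) (use pt in blast)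
  show ?thesis
  proof (intro conjI impI)
    show "inv PP < inv QQ" using e1 e2 le by linarith
    assume "inv PP + 2 \<le> inv QQ"
    hence "(\<Sum>z\<in>#R. gg ?X z + gg ?Y z) < (\<Sum>z\<in>#R. gg ?X' z + gg ?Y' z)" using e1 e2 by linarith
    then obtain z where z: "z \<in># R" "gg ?X z + gg ?Y z < gg ?X' z + gg ?Y' z"
      using sum_lt_ex by blast
    with pt have c1: "enat a < fst z" "c < snd z" "snd z < b" by blast+
    define t where "t = snd z"
    obtain R0 where R0: "R = add_mset z R0" using multi_member_split[OF z(1)] by blast
    show "\<exists>Z Z2. moveAB PP Z \<and> moveAB Z Z2 \<and> arc_move\<^sup>*\<^sup>* Z2 QQ"
    proof (cases "fst z")
      case (enat s')
      have zz: "z = (enat s', t)" using enat t_def by (cases z) auto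
      have c2: "a < s'" "c < t" "t < b" using c1 enat t_def by auto
      define Z where "Z = add_mset (enat s', c) (add_mset (enat a, t) (add_mset (\<infinity>, b) R0))"
      define Z2 where "Z2 = add_mset (enat a, b) (add_mset (\<infinity>, t) (add_mset (enat s', c) R0))"
      have m1: "moveAB PP Z"
        using mvA[of a s' t c "add_mset (\<infinity>, b) R0"] c2 o
        unfolding PP_def Z_def R0 zz by (simp add: add_mset_commute)
      have m2: "moveAB Z Z2"
        using mvB[of b a t "add_mset (enat s', c) R0"] c2 o
        unfolding Z2_def Z_def by (simp add: add_mset_commute)
      have m3: "moveAB Z2 QQ"
        using mvB[of t s' c "add_mset (enat a, b) R0"] c2 o
        unfolding Z2_def QQ_def R0 zz by (simp add: add_mset_commute)
      show ?thesis using m1 m2 moveAB_arc[OF m3] by blast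
    next
      case infinity
      have zz: "z = (\<infinity>, t)" using infinity t_def by (cases z) auto
      have c2: "c < t" "t < b" using c1 t_def by auto
      define Z where "Z = add_mset (enat a, t) (add_mset (\<infinity>, b) (add_mset (\<infinity>, c) R0))"
      have m1: "moveAB PP Z"
        using mvB[of t a c "add_mset (\<infinity>, b) R0"] c2 o
        unfolding PP_def Z_def R0 zz by (simp add: add_mset_commute)
      have m2: "moveAB Z QQ"
        using mvB[of b a t "add_mset (\<infinity>, c) R0"] c2 o
        unfolding QQ_def Z_def R0 zz by (simp add: add_mset_commute)
      show ?thesis using m1 m2 by blast
    qed
  qed
qed

lemma SF:
  assumes "P \<in> D_Gamma alpha beta gamma T" "moveAB P Q"
  shows "inv P < inv Q \<and> (inv P + 2 \<le> inv Q \<longrightarrow> (\<exists>Z Z2. moveAB P Z \<and> moveAB Z Z2 \<and> arc_move\<^sup>*\<^sup>* Z2 Q))"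
  using moveAB_cases[OF assms(2)]
proof (elim disjE exE conjE)
  fix a b c d R assume "b < a" "c < b" "d < c" "P = add_mset (enat a, c) (add_mset (enat b, d) R)"
    "Q = add_mset (enat a, d) (add_mset (enat b, c) R)"
  then show ?thesis using SF_A[of a c b d R] assms(1) by blast
next
  fix a b c R assume "b < a" "c < b" "P = add_mset (enat a, c) (add_mset (\<infinity>, b) R)"
    "Q = add_mset (enat a, b) (add_mset (\<infinity>, c) R)"
  then show ?thesis using SF_B[of a c b R] assms(1) by blast
qed

end

definition topstuck :: "member multiset \<Rightarrow> bool" where
  "topstuck D \<longleftrightarrow> (\<forall>a b c d. b < a \<longrightarrow> c < b \<longrightarrow> d < c \<longrightarrow> \<not> {#(enat a, d), (enat b, c)#} \<subseteq># D) \<and>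
     (\<forall>a b c. b < a \<longrightarrow> c < b \<longrightarrow> \<not> {#(enat a, b), (\<infinity>, c)#} \<subseteq># D)"
definition botstuck :: "member multiset \<Rightarrow> bool" where
  "botstuck D \<longleftrightarrow> (\<forall>a b c d. b < a \<longrightarrow> c < b \<longrightarrow> d < c \<longrightarrow> \<not> {#(enat a, c), (enat b, d)#} \<subseteq># D) \<and>
     (\<forall>a b c. b < a \<longrightarrow> c < b \<longrightarrow> \<not> {#(enat a, c), (\<infinity>, b)#} \<subseteq># D)"

lemma le_arc_trans: "le_arc a b \<Longrightarrow> le_arc b c \<Longrightarrow> le_arc a c"
  unfolding le_arc_def by (meson rtranclp_trans)

lemma le_arc_refl: "le_arc a a" unfolding le_arc_def by simp

context
  fixes alpha beta gamma :: "nat list" and T :: "nat \<Rightarrow> nat \<Rightarrow> nat"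
  assumes h6: "\<forall>i\<ge>1. conjugate beta i - conjugate gamma i \<le> 1"
begin

lemma src_img:
  assumes "D1 \<in> D_Gamma alpha beta gamma T" "D2 \<in> D_Gamma alpha beta gamma T"
  shows "image_mset fst D1 = image_mset fst D2"
proof (rule multiset_eqI)
  fix v
  have pole: "(\<lambda>x::member. fst x = \<infinity>) = is_pole" by (rule ext) (simp add: is_pole_def)
  have z: "size (filter_mset (\<lambda>x::member. fst x = enat 0) D) = 0" if "D \<in> D_Gamma alpha beta gamma T" for D
  proof -
    have "\<forall>x\<in>#D. \<not> fst x = enat 0"
    proof
      fix x assume "x \<in># D"
      hence "valid_member x" using DG_valid[OF h6 that] by blast
      thus "\<not> fst x = enat 0" by (auto simp: valid_member_def)
    qed
    hence "filter_mset (\<lambda>x::member. fst x = enat 0) D = {#}" by (simp only: filter_mset_eq_mempty_iff) blast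
    thus ?thesis by (simp only: size_empty)
  qed
  show "count (image_mset fst D1) v = count (image_mset fst D2) v"
    unfolding count_image_filter
  proof (cases v)
    case (enat i)
    show "size (filter_mset (\<lambda>x. fst x = v) D1) = size (filter_mset (\<lambda>x. fst x = v) D2)"
    proof (cases "i = 0")
      case True
      then have "v = enat 0" using enat by simp
      then show ?thesis using z[OF assms(1)] z[OF assms(2)] by (simp only:)
    next
      case False
      then show ?thesis using assms enat by (simp add: D_Gamma_def has_LR_type_def)
    qed
  next
    case infinity
    then show "size (filter_mset (\<lambda>x. fst x = v) D1) = size (filter_mset (\<lambda>x. fst x = v) D2)"
      using assms by (simp add: pole D_Gamma_def arc_diagram_def)
  qed
qed

lemma sig_eq: "D1 \<in> D_Gamma alpha beta gamma T \<Longrightarrow> D2 \<in> D_Gamma alpha beta gamma T \<Longrightarrow> sig D1 = sig D2"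
  unfolding sig_def using src_img by metis

lemma K:
  assumes "arc_move\<^sup>*\<^sup>* Dp D"
  shows "Dp \<in> D_Gamma alpha beta gamma T \<Longrightarrow> D \<in> D_Gamma alpha beta gamma T \<Longrightarrow>
    D = Dp \<or> (inv Dp < inv D \<and> (\<exists>P1\<in>D_Gamma alpha beta gamma T. moveAB Dp P1 \<and> arc_move\<^sup>*\<^sup>* P1 D))"
  using assms
proof (induction rule: converse_rtranclp_induct)
  case base
  then show ?case by simp
next
  case (step Dp P1)
  have "sig D \<le> sig P1" using sig_path[OF step(2)] .
  moreover have "sig P1 \<le> sig Dp \<and> (sig P1 = sig Dp \<longrightarrow> moveAB Dp P1)" using sig_move[OF step(1)] .
  moreover have "sig D = sig Dp" using sig_eq step(4,5) by metis
  ultimately have mv: "moveAB Dp P1" by linarith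
  have P1: "P1 \<in> D_Gamma alpha beta gamma T" using DG_moveAB[OF h6 step(4) mv] .
  have lt: "inv Dp < inv P1" using SF[OF h6 step(4) mv] by blast
  from step(3)[OF P1 step(5)] lt have "inv Dp < inv D" by auto
  with mv P1 step(2) show ?case by blast
qed

lemma le_inv: "D \<in> D_Gamma alpha beta gamma T \<Longrightarrow> D' \<in> D_Gamma alpha beta gamma T \<Longrightarrow> le_arc D D' \<Longrightarrow> D = D' \<or> inv D' < inv D"
  unfolding le_arc_def using K by blast

lemma Cov:
  assumes y: "y \<in> D_Gamma alpha beta gamma T" and x: "x \<in> D_Gamma alpha beta gamma T"
    and le: "le_arc y x" and d: "inv x + 2 \<le> inv y"
  shows "\<exists>z\<in>D_Gamma alpha beta gamma T. le_arc y z \<and> le_arc z x \<and> inv x < inv z \<and> inv z < inv y"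
proof -
  from K[of x y] le x y d obtain P1 where P1: "P1 \<in> D_Gamma alpha beta gamma T" "moveAB x P1" "arc_move\<^sup>*\<^sup>* P1 y"
    unfolding le_arc_def by auto
  have lt1: "inv x < inv P1" using SF[OF h6 x P1(2)] by blast
  from K[OF P1(3) P1(1) y] show ?thesis
  proof
    assume "inv P1 < inv y \<and> (\<exists>P2\<in>D_Gamma alpha beta gamma T. moveAB P1 P2 \<and> arc_move\<^sup>*\<^sup>* P2 y)"
    hence "inv P1 < inv y" by blast
    moreover have "le_arc y P1" "le_arc P1 x" using P1 moveAB_arc[OF P1(2)] unfolding le_arc_def by auto
    ultimately show ?thesis using lt1 P1(1) by blast
  next
    assume yP: "y = P1"
    from SF[OF h6 x P1(2)] d yP obtain Z Z2 where Z: "moveAB x Z" "moveAB Z Z2" "arc_move\<^sup>*\<^sup>* Z2 P1"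
      by auto
    have ZD: "Z \<in> D_Gamma alpha beta gamma T" using DG_moveAB[OF h6 x Z(1)] .
    have Z2D: "Z2 \<in> D_Gamma alpha beta gamma T" using DG_moveAB[OF h6 ZD Z(2)] .
    have a1: "inv x < inv Z" using SF[OF h6 x Z(1)] by blast
    have a2: "inv Z < inv Z2" using SF[OF h6 ZD Z(2)] by blast
    have a3: "inv Z2 \<le> inv y" using K[OF Z(3) Z2D P1(1)] yP by auto
    have "le_arc y Z" unfolding le_arc_def yP
      using moveAB_arc[OF Z(2)] Z(3) by (meson converse_rtranclp_into_rtranclp)
    moreover have "le_arc Z x" unfolding le_arc_def using moveAB_arc[OF Z(1)] by blast
    ultimately show ?thesis using ZD a1 a2 a3 by (intro bexI[of _ Z]) auto
  qed
qed

end

lemma topstuckA: "topstuck D \<Longrightarrow> b < a \<Longrightarrow> c < b \<Longrightarrow> d < c \<Longrightarrow> {#(enat a, d), (enat b, c)#} \<subseteq># D \<Longrightarrow> False"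
  unfolding topstuck_def by blast
lemma topstuckB: "topstuck D \<Longrightarrow> b < a \<Longrightarrow> c < b \<Longrightarrow> {#(enat a, b), (\<infinity>, c)#} \<subseteq># D \<Longrightarrow> False"
  unfolding topstuck_def by blast
lemma botstuckA: "botstuck D \<Longrightarrow> b < a \<Longrightarrow> c < b \<Longrightarrow> d < c \<Longrightarrow> {#(enat a, c), (enat b, d)#} \<subseteq># D \<Longrightarrow> False"
  unfolding botstuck_def by blast
lemma botstuckB: "botstuck D \<Longrightarrow> b < a \<Longrightarrow> c < b \<Longrightarrow> {#(enat a, c), (\<infinity>, b)#} \<subseteq># D \<Longrightarrow> False"
  unfolding botstuck_def by blast

context
  fixes alpha beta gamma :: "nat list" and T :: "nat \<Rightarrow> nat \<Rightarrow> nat"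
  assumes h6: "\<forall>i\<ge>1. conjugate beta i - conjugate gamma i \<le> 1"
begin

lemma max_top:
  assumes D: "D \<in> D_Gamma alpha beta gamma T"
    and mx: "\<forall>E\<in>D_Gamma alpha beta gamma T. le_arc D E \<longrightarrow> E = D"
  shows "topstuck D"
  unfolding topstuck_def
proof (intro conjI allI impI notI)
  fix a b c d :: nat assume o: "b < a" "c < b" "d < c" and s: "{#(enat a, d), (enat b, c)#} \<subseteq># D"
  define R where "R = D - {#(enat a, d), (enat b, c)#}"
  have eq: "D = add_mset (enat a, d) (add_mset (enat b, c) R)" unfolding R_def by (rule sub_split[OF s])
  define E where "E = add_mset (enat a, c) (add_mset (enat b, d) R)"
  have "add_mset (enat a, d) (add_mset (enat b, c) R) \<in> D_Gamma alpha beta gamma T" using D eq by simp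
  from DG_presA'[OF h6 this o] have ED: "E \<in> D_Gamma alpha beta gamma T" unfolding E_def .
  have mv: "moveAB E D" unfolding E_def by (subst eq) (rule mvA[OF o])
  have "le_arc D E" unfolding le_arc_def using moveAB_arc[OF mv] by blast
  with mx ED have "E = D" by blast
  moreover have "inv E < inv D" using SF[OF h6 ED mv] by blast
  ultimately show False by simp
next
  fix a b c :: nat assume o: "b < a" "c < b" and s: "{#(enat a, b), (\<infinity>, c)#} \<subseteq># D"
  define R where "R = D - {#(enat a, b), (\<infinity>, c)#}"
  have eq: "D = add_mset (enat a, b) (add_mset (\<infinity>, c) R)" unfolding R_def by (rule sub_split[OF s])
  define E where "E = add_mset (enat a, c) (add_mset (\<infinity>, b) R)"
  have "add_mset (enat a, b) (add_mset (\<infinity>, c) R) \<in> D_Gamma alpha beta gamma T" using D eq by simp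
  from DG_presB'[OF h6 this o] have ED: "E \<in> D_Gamma alpha beta gamma T" unfolding E_def .
  have mv: "moveAB E D" unfolding E_def by (subst eq) (rule mvB[OF o])
  have "le_arc D E" unfolding le_arc_def using moveAB_arc[OF mv] by blast
  with mx ED have "E = D" by blast
  moreover have "inv E < inv D" using SF[OF h6 ED mv] by blast
  ultimately show False by simp
qed

lemma min_bot:
  assumes D: "D \<in> D_Gamma alpha beta gamma T"
    and mn: "\<forall>E\<in>D_Gamma alpha beta gamma T. le_arc E D \<longrightarrow> E = D"
  shows "botstuck D"
  unfolding botstuck_def
proof (intro conjI allI impI notI)
  fix a b c d :: nat assume o: "b < a" "c < b" "d < c" and s: "{#(enat a, c), (enat b, d)#} \<subseteq># D"
  define R where "R = D - {#(enat a, c), (enat b, d)#}"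
  have eq: "D = add_mset (enat a, c) (add_mset (enat b, d) R)" unfolding R_def by (rule sub_split[OF s])
  define E where "E = add_mset (enat a, d) (add_mset (enat b, c) R)"
  have "add_mset (enat a, c) (add_mset (enat b, d) R) \<in> D_Gamma alpha beta gamma T" using D eq by simp
  from DG_presA[OF h6 this o] have ED: "E \<in> D_Gamma alpha beta gamma T" unfolding E_def .
  have mv: "moveAB D E" unfolding E_def by (subst eq) (rule mvA[OF o])
  have "le_arc E D" unfolding le_arc_def using moveAB_arc[OF mv] by blast
  with mn ED have "E = D" by blast
  moreover have "inv D < inv E" using SF[OF h6 D mv] by blast
  ultimately show False by simp
next
  fix a b c :: nat assume o: "b < a" "c < b" and s: "{#(enat a, c), (\<infinity>, b)#} \<subseteq># D"
  define R where "R = D - {#(enat a, c), (\<infinity>, b)#}"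
  have eq: "D = add_mset (enat a, c) (add_mset (\<infinity>, b) R)" unfolding R_def by (rule sub_split[OF s])
  define E where "E = add_mset (enat a, b) (add_mset (\<infinity>, c) R)"
  have "add_mset (enat a, c) (add_mset (\<infinity>, b) R) \<in> D_Gamma alpha beta gamma T" using D eq by simp
  from DG_presB[OF h6 this o] have ED: "E \<in> D_Gamma alpha beta gamma T" unfolding E_def .
  have mv: "moveAB D E" unfolding E_def by (subst eq) (rule mvB[OF o])
  have "le_arc E D" unfolding le_arc_def using moveAB_arc[OF mv] by blast
  with mn ED have "E = D" by blast
  moreover have "inv D < inv E" using SF[OF h6 D mv] by blast
  ultimately show False by simp
qed

lemma DG_uniq: "D \<in> D_Gamma alpha beta gamma T \<Longrightarrow> x \<in># D \<Longrightarrow> y \<in># D \<Longrightarrow> x \<noteq> y \<Longrightarrow> 1 \<le> i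
   \<Longrightarrow> touch x i \<Longrightarrow> touch y i \<Longrightarrow> False"
  using DG_two[OF h6 _ two_sub] by blast

lemma touched_eq:
  assumes "D1 \<in> D_Gamma alpha beta gamma T" "D2 \<in> D_Gamma alpha beta gamma T" "1 \<le> t"
  shows "(\<exists>x\<in>#D1. touch x t) \<longleftrightarrow> (\<exists>x\<in>#D2. touch x t)"
proof -
  have "size (filter_mset (\<lambda>x. touch x t) D1) = size (filter_mset (\<lambda>x. touch x t) D2)"
    using assms by (simp add: D_Gamma_def arc_diagram_def touch_def)
  moreover have "(\<exists>x\<in>#D. touch x t) \<longleftrightarrow> size (filter_mset (\<lambda>x. touch x t) D) \<noteq> 0" for D :: "member multiset"
    by (simp only: size_eq_0_iff_empty filter_mset_eq_mempty_iff) blast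
  ultimately show ?thesis by metis
qed

lemma src_eq:
  assumes "D1 \<in> D_Gamma alpha beta gamma T" "D2 \<in> D_Gamma alpha beta gamma T"
  shows "(\<exists>n. (enat s, n) \<in># D1) \<longleftrightarrow> (\<exists>n. (enat s, n) \<in># D2)"
proof -
  have "(\<exists>n. (enat s, n) \<in># D) \<longleftrightarrow> enat s \<in># image_mset fst D" for D :: "member multiset"
    by (auto simp: image_iff) (metis fst_conv)
  thus ?thesis using src_img[OF h6 assms] by metis
qed

lemma touch_ex: "D \<in> D_Gamma alpha beta gamma T \<Longrightarrow> x \<in># D \<Longrightarrow> touch x (snd x)"
  by (simp add: touch_def)

lemma topkey:
  assumes D1: "D1 \<in> D_Gamma alpha beta gamma T" and D2: "D2 \<in> D_Gamma alpha beta gamma T"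
    and st: "topstuck D1"
    and IH: "\<forall>s'<s. \<forall>n. (enat s', n) \<in># D1 \<longleftrightarrow> (enat s', n) \<in># D2"
    and m1: "(enat s, n1) \<in># D1" and m2: "(enat s, n2) \<in># D2"
  shows "\<not> n2 < n1"
proof
  assume lt: "n2 < n1"
  have v1: "enat n1 < enat s" "1 \<le> n1" using DG_valid[OF h6 D1 m1] by (auto simp: valid_member_def)
  have v2: "enat n2 < enat s" "1 \<le> n2" using DG_valid[OF h6 D2 m2] by (auto simp: valid_member_def)
  have "\<exists>x\<in>#D2. touch x n2" using m2 by (intro bexI[of _ "(enat s, n2)"]) (auto simp: touch_def)
  then obtain x where x: "x \<in># D1" "touch x n2" using touched_eq[OF D1 D2 v2(2)] by blast
  obtain e m where xe: "x = (e, m)" by fastforce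
  show False
  proof (cases "e = enat n2")
    case True
    then have "\<exists>m'. (enat n2, m') \<in># D2" using src_eq[OF D1 D2, of n2] x xe by blast
    then obtain m' where "(enat n2, m') \<in># D2" by blast
    moreover have "(enat n2, m') \<noteq> (enat s, n2)" using v2 by auto
    ultimately show False by (rule DG_uniq[OF D2 _ m2 _ v2(2)]) (auto simp: touch_def)
  next
    case False
    then have mn: "m = n2" using x xe by (simp add: touch_def)
    show False
    proof (cases e)
      case infinity
      have "{#(enat s, n1), (\<infinity>, n2)#} \<subseteq># D1" using two_sub[OF m1] x xe mn infinity by auto
      then show False using topstuckB[OF st _ lt] v1 by simp
    next
      case (enat s')
      consider "s' < s" | "s' = s" | "s < s'" by linarith
      then show False
      proof cases
        case 1
        then have "(enat s', n2) \<in># D2" using IH x xe mn enat by blast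
        moreover have "(enat s', n2) \<noteq> (enat s, n2)" using 1 by simp
        ultimately show False by (rule DG_uniq[OF D2 _ m2 _ v2(2)]) (auto simp: touch_def)
      next
        case 2
        have ne: "(enat s, n2) \<noteq> (enat s, n1)" using lt by simp
        have s1: "1 \<le> s" using v1 by simp
        have mm: "(enat s, n2) \<in># D1" using x(1) xe mn enat 2 by simp
        show False by (rule DG_uniq[OF D1 mm m1 ne s1]) (simp_all add: touch_def)
      next
        case 3
        have "(enat s', n2) \<noteq> (enat s, n1)" using 3 by simp
        then have "{#(enat s', n2), (enat s, n1)#} \<subseteq># D1" using two_sub[OF _ m1] x xe mn enat by auto
        then show False using topstuckA[OF st 3 _ lt] v1 by simp
      qed
    qed
  qed
qed

lemma botkey:
  assumes D1: "D1 \<in> D_Gamma alpha beta gamma T" and D2: "D2 \<in> D_Gamma alpha beta gamma T"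
    and st: "botstuck D1"
    and IH: "\<forall>s'<s. \<forall>n. (enat s', n) \<in># D1 \<longleftrightarrow> (enat s', n) \<in># D2"
    and m1: "(enat s, n1) \<in># D1" and m2: "(enat s, n2) \<in># D2"
  shows "\<not> n1 < n2"
proof
  assume lt: "n1 < n2"
  have v1: "enat n1 < enat s" "1 \<le> n1" using DG_valid[OF h6 D1 m1] by (auto simp: valid_member_def)
  have v2: "enat n2 < enat s" "1 \<le> n2" using DG_valid[OF h6 D2 m2] by (auto simp: valid_member_def)
  have "\<exists>x\<in>#D2. touch x n2" using m2 by (intro bexI[of _ "(enat s, n2)"]) (auto simp: touch_def)
  then obtain x where x: "x \<in># D1" "touch x n2" using touched_eq[OF D1 D2 v2(2)] by blast
  obtain e m where xe: "x = (e, m)" by fastforce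
  show False
  proof (cases "e = enat n2")
    case True
    then have "\<exists>m'. (enat n2, m') \<in># D2" using src_eq[OF D1 D2, of n2] x xe by blast
    then obtain m' where "(enat n2, m') \<in># D2" by blast
    moreover have "(enat n2, m') \<noteq> (enat s, n2)" using v2 by auto
    ultimately show False by (rule DG_uniq[OF D2 _ m2 _ v2(2)]) (auto simp: touch_def)
  next
    case False
    then have mn: "m = n2" using x xe by (simp add: touch_def)
    show False
    proof (cases e)
      case infinity
      have "{#(enat s, n1), (\<infinity>, n2)#} \<subseteq># D1" using two_sub[OF m1] x xe mn infinity by auto
      then show False using botstuckB[OF st _ lt] v2 by (simp add: add_mset_commute)
    next
      case (enat s')
      consider "s' < s" | "s' = s" | "s < s'" by linarith
      then show False
      proof cases
        case 1
        then have "(enat s', n2) \<in># D2" using IH x xe mn enat by blast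
        moreover have "(enat s', n2) \<noteq> (enat s, n2)" using 1 by simp
        ultimately show False by (rule DG_uniq[OF D2 _ m2 _ v2(2)]) (auto simp: touch_def)
      next
        case 2
        have ne: "(enat s, n2) \<noteq> (enat s, n1)" using lt by simp
        have s1: "1 \<le> s" using v1 by simp
        have mm: "(enat s, n2) \<in># D1" using x(1) xe mn enat 2 by simp
        show False by (rule DG_uniq[OF D1 mm m1 ne s1]) (simp_all add: touch_def)
      next
        case 3
        have "(enat s', n2) \<noteq> (enat s, n1)" using 3 by simp
        then have "{#(enat s', n2), (enat s, n1)#} \<subseteq># D1" using two_sub[OF _ m1] x xe mn enat by auto
        then show False using botstuckA[OF st 3 _ lt] v2 by simp
      qed
    qed
  qed
qed

end

context
  fixes alpha beta gamma :: "nat list" and T :: "nat \<Rightarrow> nat \<Rightarrow> nat"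
  assumes h6: "\<forall>i\<ge>1. conjugate beta i - conjugate gamma i \<le> 1"
begin

lemma cnt1:
  assumes D: "D \<in> D_Gamma alpha beta gamma T" shows "count D x \<le> 1"
proof (rule ccontr)
  assume "\<not> count D x \<le> 1"
  hence c2: "2 \<le> count D x" by simp
  have xD: "x \<in># D"
  proof (rule ccontr)
    assume "x \<notin># D" hence "count D x = 0" by (simp add: not_in_iff)
    with c2 show False by simp
  qed
  have sub: "{#x, x#} \<subseteq># D" unfolding subseteq_mset_def
  proof
    fix a show "count {#x, x#} a \<le> count D a" using c2 by (cases "a = x") auto
  qed
  have "1 \<le> snd x" using DG_valid[OF h6 D xD] by (simp add: valid_member_def)
  from DG_two[OF h6 D sub this] show False by (simp add: touch_def)
qed

lemma pole_transfer:
  assumes Da: "Da \<in> D_Gamma alpha beta gamma T" and Db: "Db \<in> D_Gamma alpha beta gamma T"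
    and arcs: "\<forall>s n. (enat s, n) \<in># Da \<longleftrightarrow> (enat s, n) \<in># Db"
    and p: "(\<infinity>, t) \<in># Da"
  shows "(\<infinity>, t) \<in># Db"
proof -
  have t1: "1 \<le> t" using DG_valid[OF h6 Da p] by (simp add: valid_member_def)
  have "\<exists>y\<in>#Da. touch y t" using p by (intro bexI[of _ "(\<infinity>, t)"]) (auto simp: touch_def)
  then obtain y where y: "y \<in># Db" "touch y t" using touched_eq[OF h6 Da Db t1] by blast
  obtain e m where ye: "y = (e, m)" by fastforce
  show ?thesis
  proof (cases "e = enat t")
    case True
    then have "\<exists>m'. (enat t, m') \<in># Da" using src_eq[OF h6 Da Db, of t] y ye by blast
    then obtain m' where mm: "(enat t, m') \<in># Da" by blast
    have ne: "(enat t, m') \<noteq> (\<infinity>, t)" by simp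
    have False by (rule DG_uniq[OF h6 Da mm p ne t1]) (simp_all add: touch_def)
    thus ?thesis ..
  next
    case False
    then have mt: "m = t" using y ye by (simp add: touch_def)
    show ?thesis
    proof (cases e)
      case infinity
      then show ?thesis using y ye mt by simp
    next
      case (enat s)
      then have mm: "(enat s, t) \<in># Da" using arcs y ye mt by simp
      have ne: "(enat s, t) \<noteq> (\<infinity>, t)" by simp
      have False by (rule DG_uniq[OF h6 Da mm p ne t1]) (simp_all add: touch_def)
      thus ?thesis ..
    qed
  qed
qed

lemma eq_from_key:
  assumes D1: "D1 \<in> D_Gamma alpha beta gamma T" and D2: "D2 \<in> D_Gamma alpha beta gamma T"
    and H: "\<And>s n1 n2. \<forall>s'<s. \<forall>n. (enat s', n) \<in># D1 \<longleftrightarrow> (enat s', n) \<in># D2 \<Longrightarrow>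
       (enat s, n1) \<in># D1 \<Longrightarrow> (enat s, n2) \<in># D2 \<Longrightarrow> n1 = n2"
  shows "D1 = D2"
proof -
  have arcs: "\<forall>n. (enat s, n) \<in># D1 \<longleftrightarrow> (enat s, n) \<in># D2" for s
  proof (induction s rule: less_induct)
    case (less s)
    hence IH: "\<forall>s'<s. \<forall>n. (enat s', n) \<in># D1 \<longleftrightarrow> (enat s', n) \<in># D2" by blast
    show ?case
    proof (intro allI iffI)
      fix n assume m: "(enat s, n) \<in># D1"
      then obtain n2 where m2: "(enat s, n2) \<in># D2" using src_eq[OF h6 D1 D2, of s] by blast
      with H[OF IH m m2] show "(enat s, n) \<in># D2" by simp
    next
      fix n assume m: "(enat s, n) \<in># D2"
      then obtain n1 where m1: "(enat s, n1) \<in># D1" using src_eq[OF h6 D1 D2, of s] by blast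
      with H[OF IH m1 m] show "(enat s, n) \<in># D1" by simp
    qed
  qed
  have mem: "x \<in># D1 \<longleftrightarrow> x \<in># D2" for x
  proof -
    obtain e m where xe: "x = (e, m)" by fastforce
    show ?thesis
    proof (cases e)
      case (enat s) then show ?thesis using arcs xe by simp
    next
      case infinity
      have a1: "\<forall>s n. (enat s, n) \<in># D1 \<longleftrightarrow> (enat s, n) \<in># D2" using arcs by blast
      have a2: "\<forall>s n. (enat s, n) \<in># D2 \<longleftrightarrow> (enat s, n) \<in># D1" using arcs by blast
      show ?thesis using pole_transfer[OF D1 D2 a1] pole_transfer[OF D2 D1 a2] xe infinity by blast
    qed
  qed
  show ?thesis
  proof (rule multiset_eqI)
    fix x
    show "count D1 x = count D2 x"
    proof (cases "x \<in># D1")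
      case True
      then have "x \<in># D2" using mem by blast
      have "count D1 x \<noteq> 0" "count D2 x \<noteq> 0" using True \<open>x \<in># D2\<close> by (simp_all add: not_in_iff[symmetric])
      then show ?thesis using cnt1[OF D1, of x] cnt1[OF D2, of x] by linarith
    next
      case False
      then have "x \<notin># D2" using mem by blast
      then show ?thesis using False by (simp add: not_in_iff)
    qed
  qed
qed

lemma top_unique:
  assumes D1: "D1 \<in> D_Gamma alpha beta gamma T" and D2: "D2 \<in> D_Gamma alpha beta gamma T"
    and s1: "topstuck D1" and s2: "topstuck D2"
  shows "D1 = D2"
proof (rule eq_from_key[OF D1 D2])
  fix s n1 n2 assume IH: "\<forall>s'<s. \<forall>n. (enat s', n) \<in># D1 \<longleftrightarrow> (enat s', n) \<in># D2"
    and m1: "(enat s, n1) \<in># D1" and m2: "(enat s, n2) \<in># D2"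
  have IH': "\<forall>s'<s. \<forall>n. (enat s', n) \<in># D2 \<longleftrightarrow> (enat s', n) \<in># D1" using IH by blast
  from topkey[OF h6 D1 D2 s1 IH m1 m2] topkey[OF h6 D2 D1 s2 IH' m2 m1] show "n1 = n2" by simp
qed

lemma bot_unique:
  assumes D1: "D1 \<in> D_Gamma alpha beta gamma T" and D2: "D2 \<in> D_Gamma alpha beta gamma T"
    and s1: "botstuck D1" and s2: "botstuck D2"
  shows "D1 = D2"
proof (rule eq_from_key[OF D1 D2])
  fix s n1 n2 assume IH: "\<forall>s'<s. \<forall>n. (enat s', n) \<in># D1 \<longleftrightarrow> (enat s', n) \<in># D2"
    and m1: "(enat s, n1) \<in># D1" and m2: "(enat s, n2) \<in># D2"
  have IH': "\<forall>s'<s. \<forall>n. (enat s', n) \<in># D2 \<longleftrightarrow> (enat s', n) \<in># D1" using IH by blast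
  from botkey[OF h6 D1 D2 s1 IH m1 m2] botkey[OF h6 D2 D1 s2 IH' m2 m1] show "n1 = n2" by simp
qed

lemma ex_max:
  assumes D: "D \<in> D_Gamma alpha beta gamma T"
  shows "\<exists>M\<in>D_Gamma alpha beta gamma T. (\<forall>E\<in>D_Gamma alpha beta gamma T. le_arc M E \<longrightarrow> E = M) \<and> le_arc D M"
proof -
  obtain M where M: "M \<in> D_Gamma alpha beta gamma T \<and> le_arc D M"
    and mn: "\<forall>E. E \<in> D_Gamma alpha beta gamma T \<and> le_arc D E \<longrightarrow> inv M \<le> inv E"
    using ex_has_least_nat[of "\<lambda>E. E \<in> D_Gamma alpha beta gamma T \<and> le_arc D E" D inv] D le_arc_refl
    by blast
  have "\<forall>E\<in>D_Gamma alpha beta gamma T. le_arc M E \<longrightarrow> E = M"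
  proof (intro ballI impI)
    fix E assume E: "E \<in> D_Gamma alpha beta gamma T" "le_arc M E"
    hence "inv M \<le> inv E" using mn M le_arc_trans by blast
    with le_inv[OF h6 _ E(1) E(2)] M show "E = M" by fastforce
  qed
  with M show ?thesis by blast
qed

lemma size_DG: "D \<in> D_Gamma alpha beta gamma T \<Longrightarrow> size D = conjugate alpha 2 + (conjugate alpha 1 - conjugate alpha 2)"
proof -
  assume D: "D \<in> D_Gamma alpha beta gamma T"
  have pe: "(\<lambda>x. \<not> is_arc x) = is_pole" by (rule ext) (simp add: is_arc_def is_pole_def)
  have "size D = size (filter_mset is_arc D) + size (filter_mset (\<lambda>x. \<not> is_arc x) D)"
    by (induction D) auto
  also have "\<dots> = conjugate alpha 2 + (conjugate alpha 1 - conjugate alpha 2)"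
    using D unfolding pe by (simp add: D_Gamma_def arc_diagram_def)
  finally show ?thesis .
qed

lemma inv_bound: "inv D \<le> size D * size D"
proof -
  have "inv D \<le> (\<Sum>x\<in>#D. size D)" unfolding inv_def
  proof (rule sum_mset_mono)
    fix x assume "x \<in># D"
    have "(\<Sum>y\<in>#D. wt x y) \<le> (\<Sum>y\<in>#D. (1::nat))" by (rule sum_mset_mono) (simp add: wt_def)
    thus "(\<Sum>y\<in>#D. wt x y) \<le> size D" by simp
  qed
  thus ?thesis by simp
qed

lemma ex_min:
  assumes D: "D \<in> D_Gamma alpha beta gamma T"
  shows "\<exists>M\<in>D_Gamma alpha beta gamma T. (\<forall>E\<in>D_Gamma alpha beta gamma T. le_arc E M \<longrightarrow> E = M) \<and> le_arc M D"
proof -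
  define S where "S = {E. E \<in> D_Gamma alpha beta gamma T \<and> le_arc E D}"
  have DS: "D \<in> S" unfolding S_def using D le_arc_refl by blast
  have bnd: "inv ` S \<subseteq> {..size D * size D}"
  proof
    fix k assume "k \<in> inv ` S"
    then obtain E where E: "E \<in> S" "k = inv E" by blast
    have "size E = size D" using size_DG E(1) D unfolding S_def by simp
    thus "k \<in> {..size D * size D}" using inv_bound[of E] E by simp
  qed
  have fin: "finite (inv ` S)" using finite_subset[OF bnd] by simp
  have "Max (inv ` S) \<in> inv ` S" using fin DS by (intro Max_in) auto
  then obtain M where M: "M \<in> S" "inv M = Max (inv ` S)" by auto
  have "\<forall>E\<in>D_Gamma alpha beta gamma T. le_arc E M \<longrightarrow> E = M"
  proof (intro ballI impI)
    fix E assume E: "E \<in> D_Gamma alpha beta gamma T" "le_arc E M"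
    hence "E \<in> S" using M(1) le_arc_trans unfolding S_def by blast
    hence "inv E \<le> inv M" using M(2) fin by simp
    moreover have "M \<in> D_Gamma alpha beta gamma T" using M(1) unfolding S_def by blast
    ultimately show "E = M" using le_inv[OF h6 E(1) _ E(2)] by fastforce
  qed
  with M(1) show ?thesis unfolding S_def by blast
qed

end

context
  fixes alpha beta gamma :: "nat list" and T :: "nat \<Rightarrow> nat \<Rightarrow> nat"
  assumes h6: "\<forall>i\<ge>1. conjugate beta i - conjugate gamma i \<le> 1"
begin

lemma chain_card:
  assumes tp: "tp \<in> D_Gamma alpha beta gamma T" "\<forall>D\<in>D_Gamma alpha beta gamma T. le_arc D tp"
    and bt: "bt \<in> D_Gamma alpha beta gamma T" "\<forall>D\<in>D_Gamma alpha beta gamma T. le_arc bt D"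
    and sat: "saturated_chain (D_Gamma alpha beta gamma T) le_arc C"
  shows "card C = inv bt + 1 - inv tp"
proof -
  have CD: "C \<subseteq> D_Gamma alpha beta gamma T"
    and cmp: "\<forall>x\<in>C. \<forall>y\<in>C. le_arc x y \<or> le_arc y x"
    and nosup: "\<not> (\<exists>C'. is_chain_in (D_Gamma alpha beta gamma T) le_arc C' \<and> C \<subset> C')"
    using sat unfolding saturated_chain_def is_chain_in_def by blast+
  have ext: False if z: "z \<in> D_Gamma alpha beta gamma T" "z \<notin> C" "\<forall>w\<in>C. le_arc w z \<or> le_arc z w" for z
  proof -
    have "insert z C \<subseteq> D_Gamma alpha beta gamma T" using CD z(1) by blast
    moreover have "\<forall>x\<in>insert z C. \<forall>y\<in>insert z C. le_arc x y \<or> le_arc y x"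
    proof (intro ballI)
      fix x y assume "x \<in> insert z C" "y \<in> insert z C"
      then show "le_arc x y \<or> le_arc y x" using cmp z(3) le_arc_refl[of z] by auto
    qed
    ultimately have "is_chain_in (D_Gamma alpha beta gamma T) le_arc (insert z C)"
      unfolding is_chain_in_def by blast
    moreover have "C \<subset> insert z C" using z(2) by blast
    ultimately show False using nosup by blast
  qed
  have topC: "tp \<in> C"
  proof (rule ccontr)
    assume "tp \<notin> C"
    moreover have "\<forall>w\<in>C. le_arc w tp \<or> le_arc tp w" using tp CD by blast
    ultimately show False using ext tp(1) by blast
  qed
  have botC: "bt \<in> C"
  proof (rule ccontr)
    assume "bt \<notin> C"
    moreover have "\<forall>w\<in>C. le_arc w bt \<or> le_arc bt w" using bt CD by blast
    ultimately show False using ext bt(1) by blast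
  qed
  have lei: "x = y \<or> inv y < inv x" if "x \<in> C" "y \<in> C" "le_arc x y" for x y
    using le_inv[OF h6 _ _ that(3)] that CD by blast
  have inj: "inj_on inv C"
  proof (rule inj_onI)
    fix x y assume xy: "x \<in> C" "y \<in> C" "inv x = inv y"
    from cmp xy(1,2) have "le_arc x y \<or> le_arc y x" by blast
    thus "x = y" using lei[OF xy(1,2)] lei[OF xy(2,1)] xy(3) by auto
  qed
  have rng: "inv ` C \<subseteq> {inv tp..inv bt}"
  proof
    fix k assume "k \<in> inv ` C"
    then obtain w where w: "w \<in> C" "k = inv w" by blast
    have "w = tp \<or> inv tp < inv w" using lei[OF w(1) topC] tp(2) w(1) CD by blast
    moreover have "bt = w \<or> inv w < inv bt" using lei[OF botC w(1)] bt(2) w(1) CD by blast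
    ultimately show "k \<in> {inv tp..inv bt}" using w(2) by auto
  qed
  have finC: "finite C"
    using finite_imageD[OF finite_subset[OF rng finite_atLeastAtMost] inj] .
  have fill: "{inv tp..inv bt} \<subseteq> inv ` C"
  proof
    fix k assume k: "k \<in> {inv tp..inv bt}"
    show "k \<in> inv ` C"
    proof (rule ccontr)
      assume nk: "k \<notin> inv ` C"
      define A where "A = {c\<in>C. inv c < k}"
      define B where "B = {c\<in>C. k < inv c}"
      have "inv tp \<noteq> k" using nk topC by blast
      hence tA: "tp \<in> A" unfolding A_def using topC k by auto
      have "inv bt \<noteq> k" using nk botC by blast
      hence bB: "bt \<in> B" unfolding B_def using botC k by auto
      have fA: "finite A" "finite B" unfolding A_def B_def using finC by auto
      have "Max (inv ` A) \<in> inv ` A" using fA tA by (intro Max_in) auto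
      then obtain x where x: "x \<in> A" "inv x = Max (inv ` A)" by auto
      have xmax: "\<forall>w\<in>A. inv w \<le> inv x" using x(2) fA by simp
      have "Min (inv ` B) \<in> inv ` B" using fA bB by (intro Min_in) auto
      then obtain y where y: "y \<in> B" "inv y = Min (inv ` B)" by auto
      have ymin: "\<forall>w\<in>B. inv y \<le> inv w" using y(2) fA by simp
      have xC: "x \<in> C" "inv x < k" using x(1) unfolding A_def by auto
      have yC: "y \<in> C" "k < inv y" using y(1) unfolding B_def by auto
      have "\<not> le_arc x y" using lei[OF xC(1) yC(1)] xC yC by auto
      hence yx: "le_arc y x" using cmp xC(1) yC(1) by blast
      have "inv x + 2 \<le> inv y" using xC yC by linarith
      from Cov[OF h6 _ _ yx this] CD xC(1) yC(1) obtain z where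
        z: "z \<in> D_Gamma alpha beta gamma T" "le_arc y z" "le_arc z x" "inv x < inv z" "inv z < inv y"
        by blast
      have zC: "z \<notin> C"
      proof
        assume zC: "z \<in> C"
        consider "inv z < k" | "inv z = k" | "k < inv z" by linarith
        then show False
        proof cases
          case 1 then have "z \<in> A" unfolding A_def using zC by blast
          then show False using xmax z(4) by fastforce
        next
          case 2 then show False using nk zC by blast
        next
          case 3 then have "z \<in> B" unfolding B_def using zC by blast
          then show False using ymin z(5) by fastforce
        qed
      qed
      have "\<forall>w\<in>C. le_arc w z \<or> le_arc z w"
      proof
        fix w assume wC: "w \<in> C"
        have "inv w \<noteq> k" using nk wC by blast
        then consider "inv w < k" | "k < inv w" by linarith
        then show "le_arc w z \<or> le_arc z w"
        proof cases
          case 1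
          then have "inv w \<le> inv x" using xmax wC unfolding A_def by blast
          moreover have "le_arc w x \<or> le_arc x w" using cmp wC xC(1) by blast
          ultimately have "w = x \<or> le_arc x w" using lei[OF wC xC(1)] by auto
          then show ?thesis using z(3) le_arc_trans by blast
        next
          case 2
          then have "inv y \<le> inv w" using ymin wC unfolding B_def by blast
          moreover have "le_arc w y \<or> le_arc y w" using cmp wC yC(1) by blast
          ultimately have "w = y \<or> le_arc w y" using lei[OF yC(1) wC] by auto
          then show ?thesis using z(2) le_arc_trans by blast
        qed
      qed
      then show False using ext z(1) zC by blast
    qed
  qed
  have "inv ` C = {inv tp..inv bt}" using rng fill by blast
  hence "card C = card {inv tp..inv bt}" using card_image[OF inj] by simp
  thus ?thesis by simp
qed

end

theorem mainTheorem3: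
  fixes alpha beta gamma :: "nat list" and T :: "nat \<Rightarrow> nat \<Rightarrow> nat"
  assumes "is_partition alpha" "is_partition beta" "is_partition gamma"
    and "\<forall>x\<in>set alpha. x \<le> 2"
    and "LR_tableau alpha beta gamma T"
    and "\<forall>i\<ge>1. conjugate beta i - conjugate gamma i \<le> 1"
    and "saturated_chain (D_Gamma alpha beta gamma T) le_arc C1"
    and "saturated_chain (D_Gamma alpha beta gamma T) le_arc C2"
  shows "card C1 = card C2"
proof (cases "D_Gamma alpha beta gamma T = {}")
  case True
  have "C1 \<subseteq> D_Gamma alpha beta gamma T" "C2 \<subseteq> D_Gamma alpha beta gamma T"
    using assms(7,8) by (simp_all add: saturated_chain_def is_chain_in_def)
  with True have "C1 = {}" "C2 = {}" by simp_all
  then show ?thesis by simp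
next
  case False
  note h6 = assms(6)
  let ?DG = "D_Gamma alpha beta gamma T"
  from False obtain D0 where D0: "D0 \<in> ?DG" by blast
  from ex_max[OF h6 D0] obtain tp where tp: "tp \<in> ?DG" "\<forall>E\<in>?DG. le_arc tp E \<longrightarrow> E = tp" by blast
  have tst: "topstuck tp" using max_top[OF h6 tp] .
  have topall: "\<forall>D\<in>?DG. le_arc D tp"
  proof
    fix D assume D: "D \<in> ?DG"
    from ex_max[OF h6 D] obtain M where M: "M \<in> ?DG" "\<forall>E\<in>?DG. le_arc M E \<longrightarrow> E = M" "le_arc D M" by blast
    have "M = tp" using top_unique[OF h6 M(1) tp(1) max_top[OF h6 M(1,2)] tst] .
    with M(3) show "le_arc D tp" by simp
  qed
  from ex_min[OF h6 D0] obtain bt where bt: "bt \<in> ?DG" "\<forall>E\<in>?DG. le_arc E bt \<longrightarrow> E = bt" by blast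
  have bst: "botstuck bt" using min_bot[OF h6 bt] .
  have botall: "\<forall>D\<in>?DG. le_arc bt D"
  proof
    fix D assume D: "D \<in> ?DG"
    from ex_min[OF h6 D] obtain M where M: "M \<in> ?DG" "\<forall>E\<in>?DG. le_arc E M \<longrightarrow> E = M" "le_arc M D" by blast
    have "M = bt" using bot_unique[OF h6 M(1) bt(1) min_bot[OF h6 M(1,2)] bst] .
    with M(3) show "le_arc bt D" by simp
  qed
  show ?thesis
    using chain_card[OF h6 tp(1) topall bt(1) botall assms(7)]
      chain_card[OF h6 tp(1) topall bt(1) botall assms(8)] by simp
qed

end
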